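(* Let $G=(V,E)$ be a $d$-regular $\epsilon$-spectral expander on $2n$ vertices with $0<\epsilon<1/2$ and $\epsilon n$ an integer. Then the number $m((1-\epsilon)n)$ of matchings of $G$ with exactly $(1-\epsilon)n$ edges satisfies $$m((1-\epsilon)n)\geq\left(\frac de\right)^{n(1-\epsilon)}e^{-2\epsilon n}.$$
   Context: For a graph on $2n$ vertices with adjacency matrix $A$ and degree matrix $D$, $\tilde A=D^{-1/2}AD^{-1/2}$ has eigenvalues $\lambda_1\geq\dots\geq\lambda_{2n}$, $\sigma_2(\tilde A)=\max\{\lambda_2,|\lambda_{2n}|\}$, and the graph is an $\epsilon$-spectral expander if $\sigma_2(\tilde A)\leq\epsilon$. *)

theory Defs
  imports "Jordan_Normal_Form.Char_Poly" "HOL-Library.Multiset"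
begin

definition simple_graph :: "nat \<Rightarrow> (nat \<Rightarrow> nat \<Rightarrow> bool) \<Rightarrow> bool" where
  "simple_graph N E \<longleftrightarrow> (\<forall>u v. E u v \<longrightarrow> u < N \<and> v < N \<and> u \<noteq> v \<and> E v u)"

definition degree :: "nat \<Rightarrow> (nat \<Rightarrow> nat \<Rightarrow> bool) \<Rightarrow> nat \<Rightarrow> nat" where
  "degree N E v = card {u. u < N \<and> E v u}"

definition regular :: "nat \<Rightarrow> (nat \<Rightarrow> nat \<Rightarrow> bool) \<Rightarrow> nat \<Rightarrow> bool" where
  "regular N E d \<longleftrightarrow> (\<forall>v<N. degree N E v = d)"

definition adj_mat :: "nat \<Rightarrow> (nat \<Rightarrow> nat \<Rightarrow> bool) \<Rightarrow> real mat" where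
  "adj_mat N E = mat N N (\<lambda>(i,j). if E i j then 1 else 0)"

text \<open>D^(-1/2) A D^(-1/2), with D the diagonal degree matrix.\<close>
definition norm_adj_mat :: "nat \<Rightarrow> (nat \<Rightarrow> nat \<Rightarrow> bool) \<Rightarrow> real mat" where
  "norm_adj_mat N E = mat N N (\<lambda>(i,j).
      (if E i j then 1 else 0) / (sqrt (real (degree N E i)) * sqrt (real (degree N E j))))"

definition eigenvalues_mset :: "real mat \<Rightarrow> real multiset" where
  "eigenvalues_mset A = Abs_multiset (\<lambda>x. order x (char_poly A))"

text \<open>Eigenvalues in non-increasing order: lambda_1 >= ... >= lambda_N (0-indexed list).\<close>
definition eigenvalues_desc :: "real mat \<Rightarrow> real list" where
  "eigenvalues_desc A = rev (sorted_list_of_multiset (eigenvalues_mset A))"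

definition sigma2 :: "real mat \<Rightarrow> real" where
  "sigma2 A = max (eigenvalues_desc A ! 1) \<bar>eigenvalues_desc A ! (dim_row A - 1)\<bar>"

definition spectral_expander :: "nat \<Rightarrow> (nat \<Rightarrow> nat \<Rightarrow> bool) \<Rightarrow> real \<Rightarrow> bool" where
  "spectral_expander N E \<epsilon> \<longleftrightarrow> sigma2 (norm_adj_mat N E) \<le> \<epsilon>"

definition matching :: "(nat \<Rightarrow> nat \<Rightarrow> bool) \<Rightarrow> nat set set \<Rightarrow> bool" where
  "matching E M \<longleftrightarrow> (\<forall>e\<in>M. \<exists>u v. e = {u, v} \<and> E u v) \<and>
     (\<forall>e\<in>M. \<forall>f\<in>M. e \<noteq> f \<longrightarrow> e \<inter> f = {})"

definition num_matchings :: "(nat \<Rightarrow> nat \<Rightarrow> bool) \<Rightarrow> nat \<Rightarrow> nat" where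
  "num_matchings E k = card {M. matching E M \<and> card M = k}"

end

theory Submission
  imports Defs "HOL-Analysis.Function_Topology" "HOL-Combinatorics.Multiset_Permutations"
begin

lemma order_prod_linear:
  "order x (\<Prod>r\<leftarrow>rs. [:- r, 1:]) = count (mset rs) (x::real)"
proof (induction rs)
  case Nil
  then show ?case by (simp add: order_0I)
next
  case (Cons a rs)
  have nz: "(\<Prod>r\<leftarrow>rs. [:- r, 1:]) \<noteq> (0::real poly)"
    by (auto simp: prod_list_zero_iff)
  have "[:- a, 1:] * (\<Prod>r\<leftarrow>rs. [:- r, 1:]) \<noteq> (0::real poly)" using nz by (simp only: mult_eq_0_iff) simp
  then have "order x ([:- a, 1:] * (\<Prod>r\<leftarrow>rs. [:- r, 1:])) = order x [:- a, 1:] + order x (\<Prod>r\<leftarrow>rs. [:- r, 1:])"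
    by (rule order_mult)
  then show ?case using Cons by (simp add: order_linear')
qed

lemma real_eig_of_sym:
  fixes A :: "real mat"
  assumes A: "A \<in> carrier_mat N N" and sym: "\<And>i j. i < N \<Longrightarrow> j < N \<Longrightarrow> A $$ (i,j) = A $$ (j,i)"
    and ev: "eigenvalue (of_real_hom.mat_hom A) (a::complex)"
  shows "Im a = 0"
proof -
  let ?B = "of_real_hom.mat_hom A :: complex mat"
  have B: "?B \<in> carrier_mat N N" using A by simp
  from ev obtain v where v: "eigenvector ?B v a" unfolding eigenvalue_def by auto
  then have vc: "v \<in> carrier_vec N" and v0: "v \<noteq> 0\<^sub>v N" and Bv: "?B *\<^sub>v v = a \<cdot>\<^sub>v v"
    using B unfolding eigenvector_def by auto
  have comp: "(\<Sum>j<N. of_real (A $$ (i,j)) * v $ j) = a * v $ i" if i: "i < N" for i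
  proof -
    have "(?B *\<^sub>v v) $ i = a * v $ i" using Bv i vc by simp
    moreover have "(?B *\<^sub>v v) $ i = (\<Sum>j<N. of_real (A $$ (i,j)) * v $ j)"
      using i A vc by (simp add: scalar_prod_def lessThan_atLeast0)
    ultimately show ?thesis by simp
  qed
  define z where "z = (\<Sum>i<N. \<Sum>j<N. cnj (v $ i) * of_real (A $$ (i,j)) * v $ j)"
  define S where "S = (\<Sum>i<N. (cmod (v $ i))^2)"
  have z1: "z = a * of_real S"
  proof -
    have "z = (\<Sum>i<N. cnj (v $ i) * (\<Sum>j<N. of_real (A $$ (i,j)) * v $ j))"
      unfolding z_def by (simp add: sum_distrib_left mult.assoc)
    also have "\<dots> = (\<Sum>i<N. a * (cnj (v $ i) * v $ i))"
      by (rule sum.cong, simp, simp add: comp)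
    also have "\<dots> = a * (\<Sum>i<N. cnj (v $ i) * v $ i)" by (simp add: sum_distrib_left)
    also have "(\<Sum>i<N. cnj (v $ i) * v $ i) = of_real S"
      unfolding S_def of_real_sum by (rule sum.cong, simp, simp add: complex_eq_iff cmod_def power2_eq_square)
    finally show ?thesis .
  qed
  have "cnj z = (\<Sum>i<N. \<Sum>j<N. v $ i * of_real (A $$ (i,j)) * cnj (v $ j))"
    unfolding z_def by simp
  also have "\<dots> = (\<Sum>j<N. \<Sum>i<N. v $ i * of_real (A $$ (i,j)) * cnj (v $ j))"
    by (rule sum.swap)
  also have "\<dots> = z" unfolding z_def
    by (rule sum.cong, simp, rule sum.cong, simp, simp add: sym mult.commute mult.left_commute)
  finally have "Im z = 0" by (metis cnj.simps(2) neg_equal_zero)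
  have "S > 0"
  proof -
    from v0 vc obtain i where i: "i < N" "v $ i \<noteq> 0" by (metis eq_vecI index_zero_vec(1) index_zero_vec(2) carrier_vecD)
    have "(cmod (v $ i))^2 > 0" using i by simp
    moreover have "(cmod (v $ i))^2 \<le> S" unfolding S_def
      by (rule member_le_sum[of i "{..<N}" "\<lambda>i. (cmod (v $ i))^2"], insert i, auto)
    ultimately show ?thesis by linarith
  qed
  with z1 \<open>Im z = 0\<close> show ?thesis by simp
qed

lemma map_of_real_prod: "map_poly (of_real::real\<Rightarrow>complex) (\<Prod>r\<leftarrow>rs. [:- r, 1:]) = (\<Prod>r\<leftarrow>rs. [:- of_real r, 1:])"
proof -
  interpret m: map_poly_comm_ring_hom "of_real :: real \<Rightarrow> complex" ..
  show ?thesis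
  proof (induction rs)
    case (Cons a rs)
    have "map_poly (of_real::real\<Rightarrow>complex) ([:-a,1:] * (\<Prod>r\<leftarrow>rs. [:- r, 1:])) = map_poly of_real [:-a,1:] * map_poly of_real (\<Prod>r\<leftarrow>rs. [:- r, 1:])"
      by (rule m.hom_mult)
    then show ?case using Cons by (simp only: prod_list.Cons) (simp add: of_real_hom.map_poly_pCons_hom)
  qed simp
qed
lemma map_of_real_inj: "map_poly (of_real::real\<Rightarrow>complex) p = map_poly of_real q \<Longrightarrow> p = q"
  by (rule poly_eqI) (metis of_real_hom.coeff_map_poly_hom of_real_eq_iff)

lemma sym_char_poly_split:
  fixes A :: "real mat"
  assumes A: "A \<in> carrier_mat N N" and sym: "\<And>i j. i < N \<Longrightarrow> j < N \<Longrightarrow> A $$ (i,j) = A $$ (j,i)"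
  shows "\<exists>rs. char_poly A = (\<Prod>r\<leftarrow>rs. [:- r, 1:]) \<and> length rs = N"
proof -
  let ?B = "of_real_hom.mat_hom A :: complex mat"
  have B: "?B \<in> carrier_mat N N" using A by simp
  from char_poly_factorized[OF B] obtain as where as: "char_poly ?B = (\<Prod>a\<leftarrow>as. [:- a, 1:])" "length as = N"
    by blast
  have re: "Im a = 0" if a: "a \<in> set as" for a
  proof (rule real_eig_of_sym[OF A sym])
    have "poly (char_poly ?B) a = 0" unfolding as(1) using a by (rule linear_poly_root)
    then show "eigenvalue ?B a" using eigenvalue_root_char_poly[OF B] by simp
  qed
  define rs where "rs = map Re as"
  have asrs: "as = map of_real rs" unfolding rs_def map_map
    by (rule HOL.sym[OF map_idI]) (simp add: re complex_eq_iff)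
  have "map_poly of_real (char_poly A) = map_poly (of_real::real\<Rightarrow>complex) (\<Prod>r\<leftarrow>rs. [:- r, 1:])"
    unfolding map_of_real_prod of_real_hom.char_poly_hom[OF A, symmetric] as(1) asrs
    by (simp add: o_def)
  then have "char_poly A = (\<Prod>r\<leftarrow>rs. [:- r, 1:])" by (rule map_of_real_inj)
  moreover have "length rs = N" using as(2) rs_def by simp
  ultimately show ?thesis by blast
qed

lemma sym_min_eig_le:
  fixes A :: "real mat"
  assumes A: "A \<in> carrier_mat N N" and sym: "\<And>i j. i < N \<Longrightarrow> j < N \<Longrightarrow> A $$ (i,j) = A $$ (j,i)"
    and mu: "poly (char_poly A) mu = 0"
  shows "eigenvalues_desc A ! (N - 1) \<le> mu"
proof -
  obtain rs where rs: "char_poly A = (\<Prod>r\<leftarrow>rs. [:- r, 1:])" "length rs = N"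
    using sym_char_poly_split[OF A sym] by blast
  have "eigenvalues_mset A = mset rs"
    unfolding eigenvalues_mset_def rs(1) order_prod_linear by (simp add: count_inverse)
  then have ed: "eigenvalues_desc A = rev (sort rs)" unfolding eigenvalues_desc_def by simp
  have "mu \<in> set rs" using mu unfolding rs(1) poly_prod_list_zero_iff by auto
  then obtain i where i: "i < length (sort rs)" "sort rs ! i = mu"
    by (metis in_set_conv_nth set_sort)
  have N: "N > 0" using i rs(2) by simp
  have "eigenvalues_desc A ! (N - 1) = sort rs ! 0"
    unfolding ed using N rs(2) by (simp add: rev_nth)
  also have "\<dots> \<le> sort rs ! i" by (rule sorted_nth_mono) (use i in auto)
  finally show ?thesis using i by simp
qed

lemma cont_coord[continuous_intros]: "continuous_on S (\<lambda>x::nat\<Rightarrow>real. x i)"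
  by (rule continuous_on_subset[OF continuous_on_product_coordinates]) simp

lemma quad_expand:
  fixes A :: "real mat"
  assumes sym: "\<And>i j. i < N \<Longrightarrow> j < N \<Longrightarrow> A $$ (i,j) = A $$ (j,i)"
  shows "(\<Sum>i<N. \<Sum>j<N. A $$ (i,j) * (v i + t * w i) * (v j + t * w j))
       = (\<Sum>i<N. \<Sum>j<N. A $$ (i,j) * v i * v j) + 2 * t * (\<Sum>i<N. w i * (\<Sum>j<N. A $$ (i,j) * v j))
         + t^2 * (\<Sum>i<N. \<Sum>j<N. A $$ (i,j) * w i * w j)"
proof -
  have e: "A $$ (i,j) * (v i + t * w i) * (v j + t * w j) =
     A $$ (i,j) * v i * v j + t * (A $$ (i,j) * w i * v j) + t * (A $$ (i,j) * v i * w j) + t^2 * (A $$ (i,j) * w i * w j)" for i j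
    by (simp add: algebra_simps power2_eq_square)
  have s: "(\<Sum>i<N. \<Sum>j<N. A $$ (i,j) * v i * w j) = (\<Sum>i<N. \<Sum>j<N. A $$ (i,j) * w i * v j)"
  proof -
    have "(\<Sum>i<N. \<Sum>j<N. A $$ (i,j) * v i * w j) = (\<Sum>j<N. \<Sum>i<N. A $$ (i,j) * v i * w j)"
      by (rule sum.swap)
    also have "\<dots> = (\<Sum>j<N. \<Sum>i<N. A $$ (j,i) * w j * v i)"
      by (rule sum.cong, simp, rule sum.cong, simp, simp add: sym)
    finally show ?thesis .
  qed
  have s2: "(\<Sum>i<N. \<Sum>j<N. A $$ (i,j) * w i * v j) = (\<Sum>i<N. w i * (\<Sum>j<N. A $$ (i,j) * v j))"
    by (simp add: sum_distrib_left mult.commute mult.left_commute)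
  show ?thesis
    unfolding e sum.distrib sum_distrib_left[symmetric] s s2 by simp
qed

lemma nrm_expand: "(\<Sum>i<N. (v i + t * w i)^2) = (\<Sum>i<N. (v i)^2) + 2 * t * (\<Sum>i<N. v i * w i) + t^2 * (\<Sum>i<N. (w i)^2::real)"
proof -
  have "(v i + t * w i)^2 = (v i)^2 + 2 * t * (v i * w i) + t^2 * (w i)^2" for i
    by (simp add: power2_eq_square algebra_simps)
  then show ?thesis by (simp add: sum.distrib sum_distrib_left)
qed

lemma rayleigh_min:
  fixes A :: "real mat"
  assumes A: "A \<in> carrier_mat N N" and sym: "\<And>i j. i < N \<Longrightarrow> j < N \<Longrightarrow> A $$ (i,j) = A $$ (j,i)"
    and N: "0 < N"
  shows "\<exists>mu. poly (char_poly A) mu = 0 \<and> (\<forall>x. (\<Sum>i<N. \<Sum>j<N. A $$ (i,j) * x i * x j) \<ge> mu * (\<Sum>i<N. (x i)^2))"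
proof -
  define Q where "Q x = (\<Sum>i<N. \<Sum>j<N. A $$ (i,j) * x i * x j)" for x :: "nat \<Rightarrow> real"
  define nrm where "nrm x = (\<Sum>i<N. (x i)^2)" for x :: "nat \<Rightarrow> real"
  define sph where "sph = {x. (\<forall>i. N \<le> i \<longrightarrow> x i = 0) \<and> nrm x = 1}"
  define box where "box = PiE UNIV (\<lambda>i. if i < N then {-1..1::real} else {0})"
  have cbox: "compact box"
  proof -
    have "compactin (product_topology (\<lambda>i. euclidean) UNIV) box"
      unfolding box_def compactin_PiE by auto
    then show ?thesis by (simp add: euclidean_product_topology)
  qed
  have csph: "closed sph"
  proof -
    have "sph = (\<Inter>i\<in>{N..}. {x. x i = 0}) \<inter> {x. nrm x = 1}" unfolding sph_def by auto
    moreover have "closed (\<Inter>i\<in>{N..}. {x::nat\<Rightarrow>real. x i = 0})"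
      by (intro closed_INT ballI closed_Collect_eq continuous_intros)
    moreover have "closed {x. nrm x = 1}" unfolding nrm_def
      by (intro closed_Collect_eq continuous_intros)
    ultimately show ?thesis by auto
  qed
  have sub: "sph \<subseteq> box"
  proof
    fix x assume x: "x \<in> sph"
    have "x i \<in> (if i < N then {-1..1} else {0})" for i
    proof (cases "i < N")
      case True
      have "(x i)^2 \<le> nrm x" unfolding nrm_def
        by (rule member_le_sum[of i "{..<N}" "\<lambda>i. (x i)^2"]) (use True in auto)
      then have "(x i)^2 \<le> 1" using x sph_def by simp
      then have "\<bar>x i\<bar> \<le> 1" using abs_le_square_iff[of "x i" 1] by simp
      then show ?thesis using True by auto
    next
      case False then show ?thesis using x sph_def by auto
    qed
    then show "x \<in> box" unfolding box_def by auto
  qed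
  have comp: "compact sph"
    using compact_Int_closed[OF cbox csph] sub by (simp add: Int_absorb1)
  define e0 where "e0 = (\<lambda>i::nat. if i = 0 then (1::real) else 0)"
  have "e0 \<in> sph" unfolding sph_def nrm_def e0_def using N
    by (simp add: power2_eq_square if_distrib sum.delta cong: if_cong)
  then have ne: "sph \<noteq> {}" by auto
  have cQ: "continuous_on sph Q" unfolding Q_def by (intro continuous_intros)
  obtain v where v: "v \<in> sph" and vmin: "\<And>y. y \<in> sph \<Longrightarrow> Q v \<le> Q y"
    using continuous_attains_inf[OF comp ne cQ] by blast
  define mu where "mu = Q v"
  have nrm_nonneg: "nrm y \<ge> 0" for y unfolding nrm_def by (simp add: sum_nonneg)
  have claim1: "Q y \<ge> mu * nrm y" for y
  proof (cases "nrm y = 0")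
    case True
    then have "\<forall>i\<in>{..<N}. (y i)^2 = 0" unfolding nrm_def
      by (subst sum_nonneg_eq_0_iff[symmetric]) auto
    then have "Q y = 0" unfolding Q_def by simp
    then show ?thesis using True by simp
  next
    case False
    then have pos: "nrm y > 0" using nrm_nonneg[of y] by simp
    define c where "c = 1 / sqrt (nrm y)"
    have c2: "c^2 * nrm y = 1" unfolding c_def using pos by (simp add: power_divide)
    define z where "z = (\<lambda>i. if i < N then c * y i else 0)"
    have nz: "nrm z = c^2 * nrm y" unfolding nrm_def z_def
      by (simp add: sum_distrib_left power_mult_distrib)
    have Qz: "Q z = c^2 * Q y" unfolding Q_def z_def
      by (simp add: sum_distrib_left power2_eq_square) (simp only: mult_ac)
    have "z \<in> sph" unfolding sph_def using nz c2 by (simp add: z_def)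
    then have "mu \<le> c^2 * Q y" using vmin[of z] Qz mu_def by simp
    then have "mu * nrm y \<le> c^2 * Q y * nrm y" using pos by (simp add: mult_right_mono)
    also have "\<dots> = Q y" using c2 by (simp add: algebra_simps)
    finally show ?thesis .
  qed
  define w where "w i = (\<Sum>j<N. A $$ (i,j) * v j) - mu * v i" for i
  have gt: "2 * t * nrm w + t^2 * (Q w - mu * nrm w) \<ge> 0" for t
  proof -
    define L where "L = (\<Sum>i<N. w i * (\<Sum>j<N. A $$ (i,j) * v j))"
    define P where "P = (\<Sum>i<N. v i * w i)"
    have 1: "Q (\<lambda>i. v i + t * w i) \<ge> mu * nrm (\<lambda>i. v i + t * w i)" by (rule claim1)
    have 2: "Q (\<lambda>i. v i + t * w i) = mu + 2 * t * L + t^2 * Q w"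
      unfolding Q_def mu_def L_def by (rule quad_expand[OF sym])
    have 3: "nrm (\<lambda>i. v i + t * w i) = 1 + 2 * t * P + t^2 * nrm w"
      using nrm_expand[of v t w N] v unfolding sph_def nrm_def P_def by simp
    have 4: "nrm w = L - mu * P"
    proof -
      have "(w i)^2 = w i * (\<Sum>j<N. A $$ (i,j) * v j) - mu * (v i * w i)" for i
        unfolding power2_eq_square by (subst (2) w_def) (simp add: algebra_simps)
      then show ?thesis unfolding nrm_def L_def P_def by (simp add: sum_subtractf sum_distrib_left)
    qed
    have "2 * t * nrm w + t^2 * (Q w - mu * nrm w) = (mu + 2 * t * L + t^2 * Q w) - mu * (1 + 2 * t * P + t^2 * nrm w)"
      unfolding 4 by (simp add: algebra_simps)
    then show ?thesis using 1 2 3 by simp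
  qed
  have nw: "nrm w = 0"
  proof (rule ccontr)
    assume "nrm w \<noteq> 0"
    then have W: "nrm w > 0" using nrm_nonneg[of w] by simp
    define R where "R = Q w - mu * nrm w"
    define t where "t = - nrm w / (\<bar>R\<bar> + 1)"
    have h: "2 * t * nrm w + t^2 * R \<ge> 0" using gt[of t] R_def by simp
    have d: "\<bar>R\<bar> + 1 > 0" by simp
    have "t^2 * R \<le> t^2 * \<bar>R\<bar>" by (simp add: mult_left_mono)
    also have "t^2 * \<bar>R\<bar> = (nrm w)^2 * \<bar>R\<bar> / (\<bar>R\<bar> + 1)^2" unfolding t_def by (simp add: power_divide)
    also have "\<dots> \<le> (nrm w)^2 / (\<bar>R\<bar> + 1)"
      using d by (simp add: power2_eq_square divide_simps mult_left_mono)
    finally have a: "t^2 * R \<le> (nrm w)^2 / (\<bar>R\<bar> + 1)" .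
    have b: "2 * t * nrm w = - 2 * ((nrm w)^2 / (\<bar>R\<bar> + 1))"
      unfolding t_def by (simp add: power2_eq_square)
    have "(nrm w)^2 / (\<bar>R\<bar> + 1) > 0" using W d by simp
    moreover note a b
    ultimately show False using h by linarith
  qed
  then have w0: "\<forall>i<N. w i = 0" unfolding nrm_def
    using sum_nonneg_eq_0_iff[of "{..<N}" "\<lambda>i. (w i)^2"] by auto
  have ev: "eigenvector A (vec N v) mu"
  proof -
    have "A *\<^sub>v vec N v = mu \<cdot>\<^sub>v vec N v"
    proof (rule eq_vecI)
      fix i assume "i < dim_vec (mu \<cdot>\<^sub>v vec N v)"
      then have i: "i < N" by simp
      have "(A *\<^sub>v vec N v) $ i = (\<Sum>j<N. A $$ (i,j) * v j)"
        using i A by (simp add: scalar_prod_def lessThan_atLeast0)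
      also have "\<dots> = mu * v i" using w0 i unfolding w_def by simp
      finally show "(A *\<^sub>v vec N v) $ i = (mu \<cdot>\<^sub>v vec N v) $ i" using i by simp
    qed (use A in simp)
    moreover have "vec N v \<noteq> 0\<^sub>v N"
    proof
      assume "vec N v = 0\<^sub>v N"
      then have "\<forall>i<N. v i = 0" by (metis index_vec index_zero_vec(1))
      then have "nrm v = 0" unfolding nrm_def by simp
      then show False using v sph_def by simp
    qed
    ultimately show ?thesis unfolding eigenvector_def using A by auto
  qed
  then have "poly (char_poly A) mu = 0"
    using eigenvalue_root_char_poly[OF A] unfolding eigenvalue_def by blast
  moreover have "\<forall>x. Q x \<ge> mu * nrm x" using claim1 by blast
  ultimately show ?thesis unfolding Q_def nrm_def by blast
qed

definition verts :: "(nat \<times> nat) list \<Rightarrow> nat list" where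
  "verts l = concat (map (\<lambda>p. [fst p, snd p]) l)"

definition validl :: "(nat \<Rightarrow> nat \<Rightarrow> bool) \<Rightarrow> (nat \<times> nat) list \<Rightarrow> bool" where
  "validl E l \<longleftrightarrow> (\<forall>p\<in>set l. fst p < snd p \<and> E (fst p) (snd p)) \<and> distinct (verts l)"

definition seqs :: "(nat \<Rightarrow> nat \<Rightarrow> bool) \<Rightarrow> nat \<Rightarrow> (nat \<times> nat) list set" where
  "seqs E k = {l. length l = k \<and> validl E l}"

definition extp :: "(nat \<Rightarrow> nat \<Rightarrow> bool) \<Rightarrow> (nat \<times> nat) list \<Rightarrow> (nat \<times> nat) set" where
  "extp E l = {p. fst p < snd p \<and> E (fst p) (snd p) \<and> fst p \<notin> set (verts l) \<and> snd p \<notin> set (verts l)}"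

definition edg :: "nat \<times> nat \<Rightarrow> nat set" where "edg p = {fst p, snd p}"

lemma verts_Nil[simp]: "verts [] = []" and verts_Cons[simp]: "verts (p # l) = fst p # snd p # verts l"
  by (simp_all add: verts_def)

lemma length_verts[simp]: "length (verts l) = 2 * length l"
  by (induction l) auto

lemma set_verts: "set (verts l) = \<Union> (edg ` set l)"
  by (induction l) (auto simp: edg_def)

lemma validl_Cons: "validl E (p # l) \<longleftrightarrow> validl E l \<and> p \<in> extp E l"
  unfolding validl_def extp_def by auto

lemma seqs_Suc: "seqs E (Suc j) = (\<lambda>(l, p). p # l) ` (SIGMA l:seqs E j. extp E l)"
proof (intro equalityI subsetI)
    fix l' assume "l' \<in> seqs E (Suc j)"
    then obtain p l where "l' = p # l" "length l = j" "validl E (p # l)"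
      unfolding seqs_def by (cases l') auto
    then show "l' \<in> (\<lambda>(l, p). p # l) ` (SIGMA l:seqs E j. extp E l)"
      unfolding seqs_def validl_Cons by (auto intro!: image_eqI[of _ _ "(l,p)"])
  next
    fix l' assume "l' \<in> (\<lambda>(l, p). p # l) ` (SIGMA l:seqs E j. extp E l)"
    then show "l' \<in> seqs E (Suc j)" unfolding seqs_def by (auto simp: validl_Cons)
qed

lemma seqs_0: "seqs E 0 = {[]}"
  unfolding seqs_def validl_def by auto

lemma finite_seqs:
  assumes "simple_graph N E" shows "finite (seqs E k)"
proof -
  have "seqs E k \<subseteq> {l. set l \<subseteq> {..<N} \<times> {..<N} \<and> length l = k}"
    using assms unfolding seqs_def validl_def simple_graph_def by fastforce
  moreover have "finite {l. set l \<subseteq> {..<N} \<times> {..<N} \<and> length l = k}"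
    by (rule finite_lists_length_eq) simp
  ultimately show ?thesis by (rule finite_subset)
qed

lemma finite_extp:
  assumes "simple_graph N E" shows "finite (extp E l)"
proof -
  have "extp E l \<subseteq> {..<N} \<times> {..<N}"
    using assms unfolding extp_def simple_graph_def by (auto simp: mem_Times_iff)
  then show ?thesis by (rule finite_subset) simp
qed

lemma card_seqs_Suc:
  assumes "simple_graph N E"
  shows "card (seqs E (Suc j)) = (\<Sum>l\<in>seqs E j. card (extp E l))"
proof -
  have "inj_on (\<lambda>(l, p). p # l) (SIGMA l:seqs E j. extp E l)"
    by (rule inj_onI) auto
  then have "card (seqs E (Suc j)) = card (SIGMA l:seqs E j. extp E l)"
    unfolding seqs_Suc by (rule card_image)
  also have "\<dots> = (\<Sum>l\<in>seqs E j. card (extp E l))"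
    by (rule card_SigmaI) (use finite_seqs[OF assms] finite_extp[OF assms] in auto)
  finally show ?thesis .
qed

lemma card_seqs_lower:
  assumes G: "simple_graph N E"
    and b: "\<And>j l. j < k \<Longrightarrow> l \<in> seqs E j \<Longrightarrow> real (card (extp E l)) \<ge> b j"
    and bpos: "\<And>j. j < k \<Longrightarrow> b j \<ge> 0"
  shows "real (card (seqs E k)) \<ge> (\<Prod>j<k. b j)"
  using b bpos
proof (induction k)
  case 0
  then show ?case by (simp add: seqs_0)
next
  case (Suc k)
  have IH: "real (card (seqs E k)) \<ge> (\<Prod>j<k. b j)" using Suc by auto
  have "(\<Prod>j<Suc k. b j) = (\<Prod>j<k. b j) * b k" by simp
  also have "\<dots> \<le> real (card (seqs E k)) * b k"
    using IH Suc.prems(2)[of k] by (simp add: mult_right_mono)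
  also have "\<dots> = (\<Sum>l\<in>seqs E k. b k)" by simp
  also have "\<dots> \<le> (\<Sum>l\<in>seqs E k. real (card (extp E l)))"
    by (rule sum_mono) (use Suc.prems(1) in auto)
  also have "\<dots> = real (card (seqs E (Suc k)))"
    unfolding card_seqs_Suc[OF G] by simp
  finally show ?case .
qed

lemma validl_matching:
  "validl E l \<Longrightarrow> matching E (set (map edg l)) \<and> card (set (map edg l)) = length l"
proof (induction l)
  case Nil
  then show ?case by (simp add: matching_def)
next
  case (Cons p l)
  then have v: "validl E l" and pe: "p \<in> extp E l" by (auto simp: validl_Cons)
  with Cons.IH have m: "matching E (set (map edg l))" and c: "card (set (map edg l)) = length l" by auto
  have pnot: "edg p \<inter> e = {}" if "e \<in> set (map edg l)" for e
    using pe that set_verts[of l] unfolding extp_def edg_def by auto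
  have "edg p \<notin> set (map edg l)"
    using pnot[of "edg p"] by (auto simp: edg_def)
  then have "card (set (map edg (p # l))) = length (p # l)" using c by simp
  moreover have "matching E (set (map edg (p # l)))"
  proof -
    have m1: "\<forall>e\<in>set (map edg (p#l)). \<exists>u v. e = {u,v} \<and> E u v"
      using m pe by (auto simp: matching_def extp_def edg_def)
    have m2: "\<forall>e\<in>set (map edg (p#l)). \<forall>f\<in>set (map edg (p#l)). e \<noteq> f \<longrightarrow> e \<inter> f = {}"
    proof (intro ballI impI)
      fix e f assume e: "e \<in> set (map edg (p#l))" and f: "f \<in> set (map edg (p#l))" and ef: "e \<noteq> f"
      show "e \<inter> f = {}"
      proof (cases "e = edg p")
        case True
        then have "f \<in> set (map edg l)" using f ef by auto
        then show ?thesis using pnot True by auto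
      next
        case False
        then have e': "e \<in> set (map edg l)" using e by auto
        show ?thesis
        proof (cases "f = edg p")
          case True then show ?thesis using pnot[OF e'] by auto
        next
          case False
          then have "f \<in> set (map edg l)" using f by auto
          then show ?thesis using m e' ef unfolding matching_def by blast
        qed
      qed
    qed
    show ?thesis using m1 m2 unfolding matching_def by blast
  qed
  ultimately show ?case by simp
qed

lemma inj_edg: "inj_on edg {p. fst p < snd p}"
  by (rule inj_onI) (auto simp: edg_def doubleton_eq_iff prod_eq_iff)

lemma card_seqs_upper:
  assumes G: "simple_graph N E"
  shows "card (seqs E k) \<le> fact k * num_matchings E k"
proof -
  define Mk where "Mk = {M. matching E M \<and> card M = k}"
  have MkP: "Mk \<subseteq> Pow (Pow {..<N})"
    proof
      fix M assume "M \<in> Mk"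
      then have "\<forall>e\<in>M. \<exists>u v. e = {u, v} \<and> E u v" unfolding Mk_def matching_def by auto
      then show "M \<in> Pow (Pow {..<N})" using G unfolding simple_graph_def by fastforce
    qed
  have fMk: "finite Mk" using MkP by (rule finite_subset) simp
  have inj: "inj_on (map edg) (seqs E k)"
  proof (rule inj_onI)
    fix x y assume x: "x \<in> seqs E k" and y: "y \<in> seqs E k" and e: "map edg x = map edg y"
    have "set x \<union> set y \<subseteq> {p. fst p < snd p}" using x y unfolding seqs_def validl_def by auto
    then have "inj_on edg (set x \<union> set y)" by (rule inj_on_subset[OF inj_edg])
    then show "x = y" using e inj_on_map_eq_map by blast
  qed
  have sub: "map edg ` seqs E k \<subseteq> (\<Union>M\<in>Mk. permutations_of_set M)"
  proof
    fix xs assume "xs \<in> map edg ` seqs E k"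
    then obtain l where l: "l \<in> seqs E k" "xs = map edg l" by auto
    then have "validl E l" "length l = k" unfolding seqs_def by auto
    from validl_matching[OF this(1)] this(2) l(2)
    have "matching E (set xs)" "card (set xs) = length xs" "length xs = k" by auto
    then show "xs \<in> (\<Union>M\<in>Mk. permutations_of_set M)"
      unfolding Mk_def permutations_of_set_def by (auto intro: card_distinct)
  qed
  have "card (seqs E k) = card (map edg ` seqs E k)" using card_image[OF inj] by simp
  also have "\<dots> \<le> card (\<Union>M\<in>Mk. permutations_of_set M)"
    by (rule card_mono[OF _ sub]) (use fMk in auto)
  also have "\<dots> \<le> (\<Sum>M\<in>Mk. card (permutations_of_set M))"
    by (rule card_UN_le[OF fMk])
  also have "\<dots> = (\<Sum>M\<in>Mk. fact k)"
  proof (rule sum.cong)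
    fix M assume "M \<in> Mk"
    then have "finite M" "card M = k" using fMk MkP unfolding Mk_def
      by (auto intro: finite_subset[of M "Pow {..<N}"])
    then show "card (permutations_of_set M) = fact k" by simp
  qed simp
  also have "\<dots> = fact k * num_matchings E k" unfolding num_matchings_def Mk_def by simp
  finally show ?thesis .
qed

lemma norm_adj_entry:
  assumes reg: "regular N E d" and i: "i < N" and j: "j < N"
  shows "norm_adj_mat N E $$ (i,j) = (if E i j then 1 else 0) / real d"
proof -
  have "degree N E i = d" "degree N E j = d" using reg i j unfolding regular_def by auto
  then show ?thesis unfolding norm_adj_mat_def using i j by simp
qed

lemma graph_quad:
  assumes G: "simple_graph N E" and reg: "regular N E d" and d: "d > 0"
    and sp: "spectral_expander N E \<epsilon>" and N: "N > 0"
  shows "(\<Sum>i<N. \<Sum>j<N. (if E i j then 1 else 0) * x i * x j) \<ge> - \<epsilon> * real d * (\<Sum>i<N. (x i)^2)"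
proof -
  define A where "A = norm_adj_mat N E"
  have A: "A \<in> carrier_mat N N" unfolding A_def norm_adj_mat_def by simp
  have ent: "A $$ (i,j) = (if E i j then 1 else 0) / real d" if "i < N" "j < N" for i j
    unfolding A_def using norm_adj_entry[OF reg that] .
  have Esym: "E i j = E j i" for i j using G unfolding simple_graph_def by blast
  have sym: "A $$ (i,j) = A $$ (j,i)" if "i < N" "j < N" for i j
    using ent[OF that] ent[of j i] that Esym[of i j] by simp
  obtain mu where mu: "poly (char_poly A) mu = 0"
    and q: "\<forall>x. (\<Sum>i<N. \<Sum>j<N. A $$ (i,j) * x i * x j) \<ge> mu * (\<Sum>i<N. (x i)^2)"
    using rayleigh_min[OF A sym N] by blast
  have "eigenvalues_desc A ! (N - 1) \<le> mu" by (rule sym_min_eig_le[OF A sym mu])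
  moreover have "\<bar>eigenvalues_desc A ! (N - 1)\<bar> \<le> \<epsilon>"
    using sp A unfolding spectral_expander_def sigma2_def A_def[symmetric] by auto
  ultimately have mue: "mu \<ge> - \<epsilon>" by linarith
  have nn: "(\<Sum>i<N. (x i)^2) \<ge> 0" by (simp add: sum_nonneg)
  have "(\<Sum>i<N. \<Sum>j<N. A $$ (i,j) * x i * x j) = (\<Sum>i<N. \<Sum>j<N. (if E i j then 1 else 0) * x i * x j) / real d"
    by (simp add: ent sum_divide_distrib)
  then have "(\<Sum>i<N. \<Sum>j<N. (if E i j then 1 else 0) * x i * x j) / real d \<ge> - \<epsilon> * (\<Sum>i<N. (x i)^2)"
    using q[rule_format, of x] mult_right_mono[OF mue nn] by linarith
  then show ?thesis using d by (simp add: field_simps)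
qed

lemma deg_sum:
  assumes reg: "regular N E d" and i: "i < N"
  shows "(\<Sum>j<N. (if E i j then 1 else 0::real)) = real d"
proof -
  have "(\<Sum>j<N. (if E i j then 1 else 0::real)) = real (card {j\<in>{..<N}. E i j})"
    by (simp add: sum.If_cases) (rule arg_cong[where f=card], auto)
  also have "{j\<in>{..<N}. E i j} = {u. u < N \<and> E i u}" by auto
  finally show ?thesis using reg i unfolding regular_def degree_def by simp
qed

lemma sum4: "(\<Sum>i<N. \<Sum>j<N. f i j - c * g i j - c * h i j + c2 * k i j) = (\<Sum>i<N. \<Sum>j<N. f i j) - c * (\<Sum>i<N. \<Sum>j<N. g i j) - c * (\<Sum>i<N. \<Sum>j<N. h i j) + c2 * (\<Sum>i<N. \<Sum>j<N. (k i j::real))"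
  by (simp add: sum.distrib sum_subtractf sum_distrib_left)

lemma mixing:
  assumes G: "simple_graph N E" and reg: "regular N E d" and d: "d > 0"
    and sp: "spectral_expander N E \<epsilon>" and N: "N > 0"
    and U: "U \<subseteq> {..<N}"
  shows "(\<Sum>i<N. \<Sum>j<N. (if E i j \<and> i \<in> U \<and> j \<in> U then 1 else 0))
      \<ge> real d * (card U)^2 / N - \<epsilon> * real d * (card U - (card U)^2 / N)"
proof -
  define s where "s = real (card U)"
  define c where "c = s / N"
  define ind where "ind i = (if i \<in> U then 1 else (0::real))" for i
  define a where "a i j = (if E i j then 1 else (0::real))" for i j
  define x where "x i = ind i - c" for i
  have sind: "(\<Sum>i<N. ind i) = s"
  proof -
    have "(\<Sum>i<N. ind i) = real (card {i\<in>{..<N}. i \<in> U})" unfolding ind_def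
      by (simp add: sum.If_cases) (rule arg_cong[where f=card], auto)
    also have "{i\<in>{..<N}. i \<in> U} = U" using U by auto
    finally show ?thesis unfolding s_def .
  qed
  have asym: "a i j = a j i" for i j
  proof -
    have "E i j = E j i" using G unfolding simple_graph_def by blast
    then show ?thesis unfolding a_def by simp
  qed
  have rowsum: "(\<Sum>j<N. a i j) = real d" if "i < N" for i
    unfolding a_def using deg_sum[OF reg that] .
  have colsum: "(\<Sum>i<N. a i j) = real d" if "j < N" for j
  proof -
    have "(\<Sum>i<N. a i j) = (\<Sum>i<N. a j i)"
      by (rule sum.cong) (simp_all add: asym)
    then show ?thesis using rowsum[OF that] by simp
  qed
  have t1: "(\<Sum>i<N. \<Sum>j<N. a i j * ind i) = s * real d"
  proof -
    have "(\<Sum>i<N. \<Sum>j<N. a i j * ind i) = (\<Sum>i<N. ind i * (\<Sum>j<N. a i j))"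
      by (simp add: sum_distrib_left mult.commute)
    also have "\<dots> = (\<Sum>i<N. ind i * real d)" by (rule sum.cong) (simp_all add: rowsum)
    also have "\<dots> = s * real d" using sind by (simp add: sum_distrib_right[symmetric])
    finally show ?thesis .
  qed
  have t2: "(\<Sum>i<N. \<Sum>j<N. a i j * ind j) = s * real d"
  proof -
    have "(\<Sum>i<N. \<Sum>j<N. a i j * ind j) = (\<Sum>j<N. \<Sum>i<N. a i j * ind j)" by (rule sum.swap)
    also have "\<dots> = (\<Sum>j<N. ind j * (\<Sum>i<N. a i j))"
      by (simp add: sum_distrib_left mult.commute)
    also have "\<dots> = (\<Sum>j<N. ind j * real d)" by (rule sum.cong) (simp_all add: colsum)
    also have "\<dots> = s * real d" using sind by (simp add: sum_distrib_right[symmetric])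
    finally show ?thesis .
  qed
  have t3: "(\<Sum>i<N. \<Sum>j<N. a i j) = real N * real d"
    by (simp add: rowsum)
  define eo where "eo = (\<Sum>i<N. \<Sum>j<N. (if E i j \<and> i \<in> U \<and> j \<in> U then 1 else (0::real)))"
  have t0: "(\<Sum>i<N. \<Sum>j<N. a i j * ind i * ind j) = eo"
    unfolding eo_def a_def ind_def by (rule sum.cong, simp, rule sum.cong, auto)
  have quad: "(\<Sum>i<N. \<Sum>j<N. a i j * x i * x j) = eo - 2 * c * s * real d + c^2 * real N * real d"
  proof -
    have e: "a i j * x i * x j = a i j * ind i * ind j - c * (a i j * ind i) - c * (a i j * ind j) + c^2 * a i j" for i j
      unfolding x_def by (simp add: algebra_simps power2_eq_square)
    show ?thesis unfolding e sum4 t0 t1 t2 t3 by (simp add: algebra_simps)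
  qed
  have nrm: "(\<Sum>i<N. (x i)^2) = s - 2 * c * s + c^2 * real N"
  proof -
    have e: "(x i)^2 = ind i - 2 * c * ind i + c^2" for i
      unfolding x_def ind_def by (simp add: power2_eq_square algebra_simps)
    have "(\<Sum>i<N. ind i - 2 * c * ind i + c^2) = (\<Sum>i<N. ind i) - 2 * c * (\<Sum>i<N. ind i) + (\<Sum>i<N. c^2)"
      by (simp add: sum.distrib sum_subtractf sum_distrib_left)
    then show ?thesis unfolding e sind by simp
  qed
  have "(\<Sum>i<N. \<Sum>j<N. a i j * x i * x j) \<ge> - \<epsilon> * real d * (\<Sum>i<N. (x i)^2)"
    unfolding a_def by (rule graph_quad[OF G reg d sp N])
  then have "eo - 2 * c * s * real d + c^2 * real N * real d \<ge> - \<epsilon> * real d * (s - 2 * c * s + c^2 * real N)"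
    unfolding quad nrm .
  moreover have X: "2 * c * s = 2 * (s^2 / N)" "c^2 * real N = s^2 / N" unfolding c_def using N by (simp_all add: power2_eq_square)
  ultimately have "eo - 2 * (s^2 / N) * real d + (s^2 / N) * real d \<ge> - \<epsilon> * real d * (s - 2 * (s^2 / N) + s^2 / N)"
    by (simp only: X mult.assoc[symmetric])
  moreover have "\<epsilon> * real d * (s - 2 * (s^2 / N) + s^2 / N) = \<epsilon> * real d * (s - s^2 / N)" by simp
  ultimately have "eo \<ge> real d * s^2 / N - \<epsilon> * real d * (s - s^2 / N)" by simp
  then show ?thesis unfolding eo_def s_def by simp
qed

lemma prod_fact: "(\<Prod>j<k. real k - real j) = fact k"
proof (induction k)
  case (Suc k)
  have "(\<Prod>j<Suc k. real (Suc k) - real j) = (real (Suc k) - 0) * (\<Prod>j<k. real (Suc k) - real (Suc j))"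
    by (subst prod.lessThan_Suc_shift) simp
  also have "(\<Prod>j<k. real (Suc k) - real (Suc j)) = (\<Prod>j<k. real k - real j)" by simp
  finally show ?case using Suc by simp
qed simp

lemma prod_ge_fact: assumes "k \<le> n" shows "(\<Prod>j<k. real n - real j) \<ge> fact k"
proof -
  have "(\<Prod>j<k. real k - real j) \<le> (\<Prod>j<k. real n - real j)"
    by (rule prod_mono) (use assms in auto)
  then show ?thesis using prod_fact by simp
qed

definition phi :: "real \<Rightarrow> real" where "phi x = x * ln x - x"

lemma phi_step: assumes b: "b > 0" and c: "c > 0" shows "c * ln (b + c) \<ge> phi (b + c) - phi b"
proof -
  have "ln ((b + c) / b) \<le> (b + c) / b - 1" by (rule ln_le_minus_one) (use b c in simp)
  then have "ln (b + c) - ln b \<le> c / b" using b c by (simp add: ln_div field_simps)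
  then have "b * (ln (b + c) - ln b) \<le> c" using b by (simp add: field_simps)
  then show ?thesis unfolding phi_def by (simp add: algebra_simps)
qed

lemma telescope_ln:
  fixes n c :: real
  assumes c: "c > 0" and pos: "n - c * real k > 0"
  shows "c * (\<Sum>j<k. ln (n - c * real j)) \<ge> phi n - phi (n - c * real k)"
proof -
  define a where "a j = n - c * real j" for j
  have "c * ln (a j) \<ge> phi (a j) - phi (a (Suc j))" if "j < k" for j
  proof -
    have "a (Suc j) > 0"
    proof -
      have "real (Suc j) \<le> real k" using that by simp
      then have "c * real (Suc j) \<le> c * real k" using c by simp
      then show ?thesis using pos unfolding a_def by simp
    qed
    moreover have "a j = a (Suc j) + c" unfolding a_def by (simp add: algebra_simps)
    ultimately show ?thesis using phi_step[of "a (Suc j)" c] c by simp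
  qed
  then have "(\<Sum>j<k. phi (a j) - phi (a (Suc j))) \<le> (\<Sum>j<k. c * ln (a j))"
    by (intro sum_mono) auto
  moreover have "(\<Sum>j<k. phi (a j) - phi (a (Suc j))) = phi (a 0) - phi (a k)"
    by (rule sum_lessThan_telescope')
  moreover have "(\<Sum>j<k. c * ln (a j)) = c * (\<Sum>j<k. ln (a j))" by (simp add: sum_distrib_left)
  ultimately show ?thesis unfolding a_def by simp
qed

lemma anl:
  fixes n k :: nat and d \<epsilon> :: real
  assumes n: "n > 0" and e0: "0 < \<epsilon>" and e1: "\<epsilon> < 1/2" and k: "real k = (1 - \<epsilon>) * real n"
    and d: "d > 0"
  shows "(\<Prod>j<k. (d / n) * (real n - real j) * (real n - (1 + \<epsilon>) * real j))
        \<ge> fact k * (d / exp 1)^k * exp (- 2 * \<epsilon> * real n)"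
proof -
  define c where "c = 1 + \<epsilon>"
  have c: "c > 0" unfolding c_def using e0 by simp
  have "real k \<le> real n" unfolding k using e0 by (simp add: algebra_simps)
  then have kn: "k \<le> n" by simp
  have last: "real n - c * real k = \<epsilon>^2 * real n"
    unfolding c_def k by (simp add: algebra_simps power2_eq_square)
  have lpos: "real n - c * real k > 0" unfolding last using e0 n by simp
  have apos: "real n - c * real j > 0" if "j < k" for j
  proof -
    have "c * real j \<le> c * real k" using that c by simp
    then show ?thesis using lpos by simp
  qed
  have tel: "c * (\<Sum>j<k. ln (real n - c * real j)) \<ge> phi n - phi (real n - c * real k)"
    by (rule telescope_ln[OF c lpos])
  have lnn: "ln (\<epsilon>^2 * real n) = 2 * ln \<epsilon> + ln n" using e0 n by (simp add: ln_mult ln_realpow)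
  have lne: "ln \<epsilon> < 0" using e0 e1 by simp
  have key: "c * (real k * ln n - real k - 2 * \<epsilon> * real n) \<le> phi n - phi (real n - c * real k)"
  proof -
    have "phi n - phi (real n - c * real k) = (1 - \<epsilon>^2) * (real n * ln n - real n) - 2 * \<epsilon>^2 * real n * ln \<epsilon>"
      unfolding last phi_def lnn by (simp add: algebra_simps power2_eq_square)
    moreover have "c * (real k * ln n - real k - 2 * \<epsilon> * real n) = (1 - \<epsilon>^2) * (real n * ln n - real n) - 2 * \<epsilon> * (1 + \<epsilon>) * real n"
      unfolding c_def k by (simp add: algebra_simps power2_eq_square)
    moreover have "- 2 * \<epsilon>^2 * real n * ln \<epsilon> \<ge> 0" using lne e0 n
      by (simp add: mult_nonneg_nonpos mult_nonpos_nonneg)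
    moreover have "2 * \<epsilon> * (1 + \<epsilon>) * real n \<ge> 0" using e0 by simp
    ultimately show ?thesis by linarith
  qed
  have sl: "(\<Sum>j<k. ln (real n - c * real j)) \<ge> real k * ln n - real k - 2 * \<epsilon> * real n"
    using key tel c by (meson mult_le_cancel_left_pos order_trans)
  have pa: "(\<Prod>j<k. real n - c * real j) = exp (\<Sum>j<k. ln (real n - c * real j))"
    by (simp add: exp_sum, intro prod.cong refl, rule exp_ln[symmetric], rule apos, simp)
  have "exp (real k * ln n - real k - 2 * \<epsilon> * real n) = (real n)^k * exp (- real k) * exp (- 2 * \<epsilon> * real n)"
    using n by (simp add: exp_diff exp_add exp_of_nat_mult exp_minus field_simps)
  then have pb: "(\<Prod>j<k. real n - c * real j) \<ge> (real n)^k * exp (- real k) * exp (- 2 * \<epsilon> * real n)"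
    unfolding pa using sl by (metis exp_le_cancel_iff)
  have "(\<Prod>j<k. (d / n) * (real n - real j) * (real n - (1 + \<epsilon>) * real j))
      = (d / n)^k * (\<Prod>j<k. real n - real j) * (\<Prod>j<k. real n - c * real j)"
    unfolding c_def prod.distrib prod_constant card_lessThan ..
  also have "\<dots> \<ge> (d / n)^k * fact k * ((real n)^k * exp (- real k) * exp (- 2 * \<epsilon> * real n))"
    using prod_ge_fact[OF kn] pb d n kn
    by (intro mult_mono) (auto intro!: mult_nonneg_nonneg prod_nonneg simp: less_imp_le)
  also have "(d / n)^k * fact k * ((real n)^k * exp (- real k) * exp (- 2 * \<epsilon> * real n))
      = fact k * (d / exp 1)^k * exp (- 2 * \<epsilon> * real n)"
    using n by (simp add: power_divide exp_of_nat_mult[symmetric] exp_minus field_simps)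
  finally show ?thesis .
qed

lemma dsum_card:
  "(\<Sum>i<(N::nat). \<Sum>j<N. if P i j then 1 else (0::real)) = real (card {p. fst p < N \<and> snd p < N \<and> P (fst p) (snd p)})"
proof -
  have "(\<Sum>i<N. \<Sum>j<N. if P i j then 1 else (0::real)) = (\<Sum>i<N. real (card {j\<in>{..<N}. P i j}))"
  proof (intro sum.cong refl)
    fix x
    have "(\<Sum>j<N. if P x j then 1 else (0::real)) = (\<Sum>j\<in>{j\<in>{..<N}. P x j}. 1)"
      by (rule sum.inter_filter[symmetric]) simp
    then show "(\<Sum>j<N. if P x j then 1 else (0::real)) = real (card {j\<in>{..<N}. P x j})" by simp
  qed
  also have "\<dots> = real (\<Sum>i<N. card {j\<in>{..<N}. P i j})" by simp
  also have "(\<Sum>i<N. card {j\<in>{..<N}. P i j}) = card (SIGMA i:{..<N}. {j\<in>{..<N}. P i j})"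
    by (rule card_SigmaI[symmetric]) auto
  also have "(SIGMA i:{..<N}. {j\<in>{..<N}. P i j}) = {p. fst p < N \<and> snd p < N \<and> P (fst p) (snd p)}"
    by auto
  finally show ?thesis .
qed

lemma extp_bound:
  assumes G: "simple_graph N E" and reg: "regular N E d" and d: "d > 0"
    and sp: "spectral_expander N E \<epsilon>" and Nn: "N = 2 * n" and n: "n > 0"
    and l: "l \<in> seqs E j"
  shows "real (card (extp E l)) \<ge> (d / n) * (real n - real j) * (real n - (1 + \<epsilon>) * real j)"
proof -
  have N: "N > 0" using Nn n by simp
  have Esym: "E u v \<Longrightarrow> E v u" and Ebd: "E u v \<Longrightarrow> u < N \<and> v < N \<and> u \<noteq> v" for u v
    using G unfolding simple_graph_def by blast+
  define V where "V = set (verts l)"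
  have lv: "validl E l" "length l = j" using l unfolding seqs_def by auto
  have VN: "V \<subseteq> {..<N}"
  proof
    fix x assume "x \<in> V"
    then obtain p where "p \<in> set l" "x \<in> edg p" unfolding V_def set_verts by auto
    moreover have "E (fst p) (snd p)" using lv(1) \<open>p \<in> set l\<close> unfolding validl_def by auto
    ultimately show "x \<in> {..<N}" using Ebd unfolding edg_def by auto
  qed
  have cV: "card V = 2 * j" unfolding V_def using lv distinct_card[of "verts l"] unfolding validl_def by simp
  define U where "U = {..<N} - V"
  have UN: "U \<subseteq> {..<N}" unfolding U_def by auto
  have cU: "card U = N - 2 * j" unfolding U_def using card_Diff_subset[OF finite_subset[OF VN] VN] cV by simp
  have jN: "2 * j \<le> N" using card_mono[OF _ VN] cV by simp
  have mix: "(\<Sum>i<N. \<Sum>j<N. (if E i j \<and> i \<in> U \<and> j \<in> U then 1 else 0))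
      \<ge> real d * (card U)^2 / N - \<epsilon> * real d * (card U - (card U)^2 / N)"
    by (rule mixing[OF G reg d sp N UN])
  define X where "X = extp E l"
  define P2 where "P2 = {p. fst p < N \<and> snd p < N \<and> (E (fst p) (snd p) \<and> fst p \<in> U \<and> snd p \<in> U)}"
  have fX: "finite X" unfolding X_def by (rule finite_extp[OF G])
  have P2: "P2 = X \<union> prod.swap ` X"
  proof (intro equalityI subsetI)
    fix p assume p: "p \<in> P2"
    obtain u v where uv: "p = (u, v)" by (cases p)
    have "E u v" "u \<in> U" "v \<in> U" "u \<noteq> v" using p Ebd unfolding P2_def uv by auto
    then show "p \<in> X \<union> prod.swap ` X"
    proof (cases "u < v")
      case True
      then show ?thesis using \<open>E u v\<close> \<open>u \<in> U\<close> \<open>v \<in> U\<close> unfolding uv X_def extp_def U_def V_def by auto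
    next
      case False
      then have "v < u" using \<open>u \<noteq> v\<close> by simp
      then have "(v, u) \<in> X" using Esym[OF \<open>E u v\<close>] \<open>u \<in> U\<close> \<open>v \<in> U\<close> unfolding X_def extp_def U_def V_def by auto
      then show ?thesis unfolding uv by (auto intro: image_eqI[of _ _ "(v,u)"])
    qed
  next
    fix p assume "p \<in> X \<union> prod.swap ` X"
    then show "p \<in> P2" using Ebd Esym unfolding P2_def X_def extp_def U_def V_def by auto
  qed
  have disj: "X \<inter> prod.swap ` X = {}" unfolding X_def extp_def by auto
  have "card P2 = card X + card (prod.swap ` X)"
    unfolding P2 by (rule card_Un_disjoint[OF fX _ disj]) (use fX in simp)
  also have "card (prod.swap ` X) = card X" by (rule card_image) simp
  finally have cP2: "card P2 = 2 * card X" by simp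
  have "(\<Sum>i<N. \<Sum>j<N. (if E i j \<and> i \<in> U \<and> j \<in> U then 1 else (0::real))) = real (card P2)"
    unfolding P2_def by (rule dsum_card)
  with mix cP2 have ineq: "2 * real (card X) \<ge> real d * (card U)^2 / N - \<epsilon> * real d * (card U - (card U)^2 / N)"
    by simp
  have sU: "real (card U) = 2 * (real n - real j)" using cU jN Nn by simp
  have "real d * (card U)^2 / N - \<epsilon> * real d * (card U - (card U)^2 / N)
      = 2 * ((d / n) * (real n - real j) * (real n - (1 + \<epsilon>) * real j))"
    using n by (simp add: sU Nn field_simps power2_eq_square)
  with ineq show ?thesis unfolding X_def by simp
qed

theorem lemma4p1:
  fixes n d :: nat and E :: "nat \<Rightarrow> nat \<Rightarrow> bool" and \<epsilon> :: real
  assumes "simple_graph (2 * n) E"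
    and "regular (2 * n) E d"
    and "spectral_expander (2 * n) E \<epsilon>"
    and "0 < \<epsilon>" and "\<epsilon> < 1 / 2"
    and "\<epsilon> * real n \<in> \<int>"
  shows "real (num_matchings E (nat \<lfloor>(1 - \<epsilon>) * real n\<rfloor>))
           \<ge> (real d / exp 1) powr (real n * (1 - \<epsilon>)) * exp (- 2 * \<epsilon> * real n)"
proof -
  note G = assms(1) and reg = assms(2) and sp = assms(3) and e0 = assms(4) and e1 = assms(5)
  define k where "k = nat \<lfloor>(1 - \<epsilon>) * real n\<rfloor>"
  obtain T where T: "\<epsilon> * real n = of_int T" using assms(6) by (elim Ints_cases)
  have "(1 - \<epsilon>) * real n = of_int (int n - T)" using T by (simp add: algebra_simps)
  moreover have "(1 - \<epsilon>) * real n \<ge> 0" using e1 by simp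
  ultimately have rk: "real k = (1 - \<epsilon>) * real n" unfolding k_def
    by (metis floor_of_int of_int_0_le_iff of_int_of_nat_eq of_nat_nat)
  show ?thesis
  proof (cases "d = 0")
    case True
    then show ?thesis by simp
  next
    case False
    then have d: "d > 0" by simp
    have pw: "(real d / exp 1) powr (real n * (1 - \<epsilon>)) = (real d / exp 1)^k"
      using d rk by (simp add: powr_realpow[symmetric] mult.commute)
    show ?thesis
    proof (cases "n = 0")
      case True
      then have k0: "k = 0" using rk by simp
      have "card (seqs E 0) \<le> fact 0 * num_matchings E 0" by (rule card_seqs_upper[OF G])
      then have "num_matchings E 0 \<ge> 1" by (simp add: seqs_0)
      then show ?thesis using pw k0 True unfolding k_def by simp
    next
      case False
      then have n: "n > 0" by simp
      define b where "b j = (d / n) * (real n - real j) * (real n - (1 + \<epsilon>) * real j)" for j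
      have "\<epsilon> * real n \<ge> 0" using e0 by simp
      moreover have "(1 - \<epsilon>) * real n = real n - \<epsilon> * real n" by (simp add: algebra_simps)
      ultimately have kn: "real k \<le> real n" using rk by linarith
      have bpos: "b j \<ge> 0" if "j < k" for j
      proof -
        have "real j < real n" using that kn by linarith
        moreover have "(1 + \<epsilon>) * real j \<le> (1 + \<epsilon>) * real k" using that e0 by simp
        moreover have "(1 + \<epsilon>) * real k \<le> real n" unfolding rk using e0
          by (simp add: algebra_simps power2_eq_square[symmetric])
        ultimately show ?thesis unfolding b_def using d by simp
      qed
      have lower: "real (card (seqs E k)) \<ge> (\<Prod>j<k. b j)"
        by (rule card_seqs_lower[OF G]) (use extp_bound[OF G reg d sp refl n] bpos in \<open>auto simp: b_def\<close>)
      have upper: "card (seqs E k) \<le> fact k * num_matchings E k" by (rule card_seqs_upper[OF G])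
      have an: "(\<Prod>j<k. b j) \<ge> fact k * (d / exp 1)^k * exp (- 2 * \<epsilon> * real n)"
        unfolding b_def by (rule anl[OF n e0 e1 rk]) (use d in simp)
      have "fact k * ((d / exp 1)^k * exp (- 2 * \<epsilon> * real n)) \<le> fact k * real (num_matchings E k)"
        using an lower upper by (smt (verit, ccfv_SIG) mult.assoc of_nat_fact of_nat_le_iff of_nat_mult)
      then have "(d / exp 1)^k * exp (- 2 * \<epsilon> * real n) \<le> real (num_matchings E k)"
        by (simp add: mult_le_cancel_left_pos)
      then show ?thesis using pw unfolding k_def by simp
    qed
  qed
qed

end
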